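(* Let $\mathcal{X}$ and $\mathcal{Y}$ be finite sets with $2 \le |\mathcal{X}|,|\mathcal{Y}| < \infty$, and let $X,Y$ have joint pmf $P_{X,Y}$ with $P_X(x)>0$ for all $x\in\mathcal{X}$ and $P_Y(y)>0$ for all $y\in\mathcal{Y}$. Writing $\eta_{\chi^2}=\eta_{\chi^2}(P_X,P_{Y|X})$ and $\eta_{\mathrm{KL}}=\eta_{\mathrm{KL}}(P_X,P_{Y|X})$, we have $$\eta_{\chi^2}\le\eta_{\mathrm{KL}}\le \frac{2\,\eta_{\chi^2}}{\phi\!\left(\max_{A\subseteq\mathcal{X}}\min\{P_X(A),1-P_X(A)\}\right)\min_{x\in\mathcal{X}}P_X(x)},$$ where $\phi:[0,\tfrac12]\to\mathbb{R}$ is given by $\phi(p)=\frac{1}{1-2p}\log\frac{1-p}{p}$ for $p\in[0,\tfrac12)$ and $\phi(\tfrac12)=2$.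
   Context: $P_X(A)=\sum_{x\in A}P_X(x)$. Let $W$ be the column stochastic matrix of the channel $P_{Y|X}$ (its $x$th column is $P_{Y|X=x}$), mapping a pmf $R_X$ on $\mathcal{X}$ to $WR_X$. The KL divergence is $D(R_X\|P_X)=\sum_x R_X(x)\log(R_X(x)/P_X(x))$ (natural log), and $\chi^2(R_X\|P_X)=\sum_x (R_X(x)-P_X(x))^2/P_X(x)$. For $D_\bullet\in\{D,\chi^2\}$, the contraction coefficient is $\eta_\bullet(P_X,P_{Y|X})=\sup\{D_\bullet(WR_X\|WP_X)/D_\bullet(R_X\|P_X): R_X \text{ a pmf on } \mathcal{X},\ 0<D_\bullet(R_X\|P_X)<\infty\}$; $\eta_{\mathrm{KL}}$ uses KL divergence and $\eta_{\chi^2}$ uses $\chi^2$-divergence. *)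

theory Defs
  imports "HOL-Analysis.Analysis"
begin

definition is_pmf :: "('a::finite \<Rightarrow> real) \<Rightarrow> bool" where
  "is_pmf R \<longleftrightarrow> (\<forall>x. 0 \<le> R x) \<and> (\<Sum>x\<in>UNIV. R x) = 1"

text \<open>KL divergence (natural log), convention 0 log 0 = 0. Only used with a
  strictly positive reference pmf, so it is always finite.\<close>
definition KL_div :: "('a::finite \<Rightarrow> real) \<Rightarrow> ('a \<Rightarrow> real) \<Rightarrow> real" where
  "KL_div R P = (\<Sum>x\<in>UNIV. if R x = 0 then 0 else R x * ln (R x / P x))"

definition chi2_div :: "('a::finite \<Rightarrow> real) \<Rightarrow> ('a \<Rightarrow> real) \<Rightarrow> real" where
  "chi2_div R P = (\<Sum>x\<in>UNIV. (R x - P x)\<^sup>2 / P x)"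

definition marg_X :: "('x::finite \<Rightarrow> 'y::finite \<Rightarrow> real) \<Rightarrow> 'x \<Rightarrow> real" where
  "marg_X PXY x = (\<Sum>y\<in>UNIV. PXY x y)"

definition marg_Y :: "('x::finite \<Rightarrow> 'y::finite \<Rightarrow> real) \<Rightarrow> 'y \<Rightarrow> real" where
  "marg_Y PXY y = (\<Sum>x\<in>UNIV. PXY x y)"

text \<open>Column stochastic matrix W: entry (y,x) is P_{Y|X}(y|x).\<close>
definition chan :: "('x::finite \<Rightarrow> 'y::finite \<Rightarrow> real) \<Rightarrow> 'y \<Rightarrow> 'x \<Rightarrow> real" where
  "chan PXY y x = PXY x y / marg_X PXY x"

definition apply_chan :: "('y \<Rightarrow> 'x::finite \<Rightarrow> real) \<Rightarrow> ('x \<Rightarrow> real) \<Rightarrow> 'y \<Rightarrow> real" where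
  "apply_chan W R y = (\<Sum>x\<in>UNIV. W y x * R x)"

definition contraction_coeff ::
  "(('x::finite \<Rightarrow> real) \<Rightarrow> ('x \<Rightarrow> real) \<Rightarrow> real) \<Rightarrow> (('y::finite \<Rightarrow> real) \<Rightarrow> ('y \<Rightarrow> real) \<Rightarrow> real)
    \<Rightarrow> ('x \<Rightarrow> real) \<Rightarrow> ('y \<Rightarrow> 'x \<Rightarrow> real) \<Rightarrow> real" where
  "contraction_coeff DvX DvY PX W =
     Sup {DvY (apply_chan W R) (apply_chan W PX) / DvX R PX | R. is_pmf R \<and> 0 < DvX R PX}"

definition eta_KL :: "('x::finite \<Rightarrow> real) \<Rightarrow> ('y::finite \<Rightarrow> 'x \<Rightarrow> real) \<Rightarrow> real" where
  "eta_KL PX W = contraction_coeff KL_div KL_div PX W"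

definition eta_chi2 :: "('x::finite \<Rightarrow> real) \<Rightarrow> ('y::finite \<Rightarrow> 'x \<Rightarrow> real) \<Rightarrow> real" where
  "eta_chi2 PX W = contraction_coeff chi2_div chi2_div PX W"

definition phi :: "real \<Rightarrow> real" where
  "phi p = (if p = 1/2 then 2 else (1 / (1 - 2*p)) * ln ((1 - p) / p))"

definition set_prob :: "('a::finite \<Rightarrow> real) \<Rightarrow> 'a set \<Rightarrow> real" where
  "set_prob P A = (\<Sum>x\<in>A. P x)"

end

theory Submission
  imports Defs "HOL-Real_Asymp.Real_Asymp"
begin

lemma ineqC:
  fixes p :: real assumes "0 < p" "p \<le> 1/2"
  shows "ln (1-p) - ln p \<le> (1-2*p) / (2*p*(1-p))"
proof -
  define m where "m = (\<lambda>t::real. (1-2*t) / (2*t*(1-t)) - (ln (1-t) - ln t))"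
  have "m (1/2) \<le> m p"
  proof (rule DERIV_nonpos_imp_nonincreasing[OF assms(2)])
    fix x assume x: "p \<le> x" "x \<le> 1/2"
    hence x0: "0 < x" "x < 1" using assms by auto
    have "DERIV m x :> (-2 * (2*x*(1-x)) - (1-2*x)*(2 - 4*x)) / (2*x*(1-x))^2 - (-1/(1-x) - 1/x)"
      unfolding m_def using x0
      by (auto intro!: derivative_eq_intros simp: power2_eq_square)
    moreover have "(-2 * (2*x*(1-x)) - (1-2*x)*(2 - 4*x)) / (2*x*(1-x))^2 - (-1/(1-x) - 1/x)
        = -2*(1-2*x)^2 / (2*x*(1-x))^2"
    proof -
      have d: "(2*x*(1-x))^2 \<noteq> 0" "x \<noteq> 0" "1 - x \<noteq> 0" using x0 by auto
      have e: "-1/(1-x) - 1/x = -(4*x*(1-x)) / (2*x*(1-x))^2" using d by (simp add: field_simps power2_eq_square)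
      show ?thesis unfolding e using d(1) by (simp add: diff_divide_distrib[symmetric] algebra_simps power2_eq_square)
    qed
    moreover have "-2*(1-2*x)^2 / (2*x*(1-x))^2 \<le> 0"
      by (simp add: divide_nonpos_nonneg)
    ultimately show "\<exists>y. DERIV m x :> y \<and> y \<le> 0" by auto
  qed
  moreover have "m (1/2) = 0" by (simp add: m_def)
  ultimately show ?thesis by (simp add: m_def)
qed

lemma ineqK:
  fixes p :: real assumes "0 < p" "p \<le> 1/2"
  shows "2*(1-2*p) \<le> ln (1-p) - ln p"
proof -
  define k where "k = (\<lambda>t::real. ln (1-t) - ln t - 2*(1-2*t))"
  have "k (1/2) \<le> k p"
  proof (rule DERIV_nonpos_imp_nonincreasing[OF assms(2)])
    fix x assume x: "p \<le> x" "x \<le> 1/2"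
    hence x0: "0 < x" "x < 1" using assms by auto
    have "DERIV k x :> -1/(1-x) - 1/x + 4"
      unfolding k_def using x0
      by (auto intro!: derivative_eq_intros)
    moreover have "-1/(1-x) - 1/x + 4 = -((1-2*x)^2 / (x*(1-x)))"
    proof -
      have d: "x*(1-x) \<noteq> 0" using x0 by auto
      have e: "-1/(1-x) - 1/x + 4 = (4*x*(1-x) - 1) / (x*(1-x))" using x0 by (simp add: field_simps)
      have f: "(4*x*(1-x) - 1) = -((1-2*x)^2)" by (simp add: power2_eq_square algebra_simps)
      show ?thesis unfolding e f by simp
    qed
    moreover have "-((1-2*x)^2 / (x*(1-x))) \<le> 0"
      using x0 by (simp add: divide_nonpos_nonneg)
    ultimately show "\<exists>y. DERIV k x :> y \<and> y \<le> 0" by auto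
  qed
  moreover have "k (1/2) = 0" by (simp add: k_def)
  ultimately show ?thesis by (simp add: k_def)
qed

lemma phi_lt: "0 < p \<Longrightarrow> p < 1/2 \<Longrightarrow> phi p = (ln (1-p) - ln p) / (1 - 2*p)"
  unfolding phi_def by (simp add: ln_div)

lemma phi_ge2: assumes "0 < p" "p \<le> 1/2" shows "2 \<le> phi p"
proof (cases "p = 1/2")
  case True thus ?thesis by (simp add: phi_def)
next
  case False
  hence "p < 1/2" using assms by auto
  thus ?thesis using ineqK[OF assms] assms by (simp add: phi_lt pos_le_divide_eq)
qed

lemma phi_le_C: assumes "0 < p" "p \<le> 1/2" shows "phi p \<le> 1/(2*p*(1-p))"
proof (cases "p = 1/2")
  case True
  thus ?thesis by (simp add: phi_def True)
next
  case False
  hence "p < 1/2" using assms by auto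
  have "phi p = (ln (1-p) - ln p)/(1-2*p)" using phi_lt assms \<open>p < 1/2\<close> by blast
  also have "\<dots> \<le> ((1-2*p) / (2*p*(1-p))) / (1-2*p)"
    by (rule divide_right_mono[OF ineqC[OF assms]]) (use \<open>p < 1/2\<close> in simp)
  also have "\<dots> = 1/(2*p*(1-p))" using \<open>p < 1/2\<close> by simp
  finally show ?thesis .
qed

lemma phi_mono: assumes "0 < p" "p \<le> r" "r \<le> 1/2" shows "phi r \<le> phi p"
proof (cases "r = 1/2")
  case True thus ?thesis using phi_ge2[of p] assms by (simp add: phi_def)
next
  case False
  hence r: "r < 1/2" using assms by auto
  define f where "f = (\<lambda>t::real. (ln (1-t) - ln t) / (1 - 2*t))"
  have "f r \<le> f p"
  proof (rule DERIV_nonpos_imp_nonincreasing[OF assms(2)])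
    fix x assume x: "p \<le> x" "x \<le> r"
    hence x0: "0 < x" "x < 1/2" using assms r by auto
    have "DERIV f x :> ((-1/(1-x) - 1/x) * (1-2*x) + 2*(ln (1-x) - ln x)) / (1-2*x)^2"
      unfolding f_def using x0
      by (auto intro!: derivative_eq_intros simp: power2_eq_square)
    moreover have "((-1/(1-x) - 1/x) * (1-2*x) + 2*(ln (1-x) - ln x)) \<le> 0"
    proof -
      have "-1/(1-x) - 1/x = - 1/(x*(1-x))" using x0 by (simp add: field_simps)
      moreover have "2*(ln (1-x) - ln x) \<le> (1-2*x)/(x*(1-x))"
        using ineqC[of x] x0 by (simp add: field_simps)
      moreover have "(-1/(x*(1-x))) * (1-2*x) = -((1-2*x)/(x*(1-x)))" by simp
      ultimately have "(-1/(1-x) - 1/x) * (1-2*x) = -((1-2*x)/(x*(1-x)))" by metis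
      with \<open>2*(ln (1-x) - ln x) \<le> _\<close> show ?thesis by linarith
    qed
    ultimately show "\<exists>y. DERIV f x :> y \<and> y \<le> 0"
      by (intro exI[of _ "((-1/(1-x) - 1/x) * (1-2*x) + 2*(ln (1-x) - ln x)) / (1-2*x)^2"])
         (auto simp: divide_nonpos_nonneg)
  qed
  thus ?thesis using assms r by (simp add: phi_lt f_def)
qed

lemma DG: assumes "0 < (t::real)" "t < 1"
  shows "((\<lambda>t. t * (ln t - a) + (1-t) * (ln (1-t) - b) - c*(t-p)^2) has_real_derivative
     (ln t - a - ln (1-t) + b - 2*c*(t-p))) (at t)"
proof -
  have "((\<lambda>t. t * (ln t - a) + (1-t) * (ln (1-t) - b) - c*(t-p)^2) has_real_derivative
     ((ln t - a) + t * (1/t)) + (-(ln (1-t) - b) + (1-t) * (-1/(1-t))) - c*(2*(t-p))) (at t)"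
    using assms by (auto intro!: derivative_eq_intros)
  moreover have "((ln t - a) + t * (1/t)) + (-(ln (1-t) - b) + (1-t) * (-1/(1-t))) - c*(2*(t-p))
      = ln t - a - ln (1-t) + b - 2*c*(t-p)" using assms by simp
  ultimately show ?thesis by metis
qed

definition xl :: "real \<Rightarrow> real \<Rightarrow> real" where
  "xl a b = (if a = 0 then 0 else a * ln (a / b))"

definition dbin :: "real \<Rightarrow> real \<Rightarrow> real" where
  "dbin q p = xl q p + xl (1-q) (1-p)"

lemma dbin_sym: "dbin (1-q) (1-p) = dbin q p"
  unfolding dbin_def by simp

lemma dbin_inner: "0 < q \<Longrightarrow> q < 1 \<Longrightarrow> 0 < p \<Longrightarrow> p < 1 \<Longrightarrow>
  dbin q p = q * (ln q - ln p) + (1-q) * (ln (1-q) - ln (1-p))"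
  unfolding dbin_def xl_def by (simp add: ln_div)

lemma binA:
  fixes p q :: real
  assumes p: "0 < p" "p \<le> 1/2" and q: "0 \<le> q" "q \<le> p"
  shows "(q-p)^2 / (2*p*(1-p)) \<le> dbin q p"
proof (cases "q = 0")
  case True
  have "dbin q p = - ln (1-p)" using True p unfolding dbin_def xl_def by (simp add: ln_div)
  moreover have "ln (1-p) \<le> -p" using ln_le_minus_one[of "1-p"] p by simp
  moreover have "(q-p)^2 / (2*p*(1-p)) = p / (2*(1-p))" using True p by (simp add: power2_eq_square)
  moreover have "p / (2*(1-p)) \<le> p" using p by (simp add: divide_le_eq)
  ultimately show ?thesis by linarith
next
  case False
  hence q0: "0 < q" using q by simp
  define c where "c = 1/(2*p*(1-p))"
  define G where "G = (\<lambda>t. t * (ln t - ln p) + (1-t) * (ln (1-t) - ln (1-p)) - c*(t-p)^2)"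
  have "G p \<le> G q"
  proof (rule DERIV_nonpos_imp_nonincreasing[OF q(2)])
    fix t assume t: "q \<le> t" "t \<le> p"
    hence t0: "0 < t" "t < 1" using q0 p by auto
    have D: "DERIV G t :> ln t - ln p - ln (1-t) + ln (1-p) - 2*c*(t-p)"
      unfolding G_def using DG[OF t0, of "ln p" "ln (1-p)" c p] by simp
    define KK where "KK = (\<lambda>u. ln u - ln (1-u) - 2*c*u)"
    have "KK t \<le> KK p"
    proof (rule DERIV_nonneg_imp_nondecreasing[OF t(2)])
      fix s assume s: "t \<le> s" "s \<le> p"
      hence s0: "0 < s" "s < 1" using t0 p by auto
      have "DERIV KK s :> 1/s + 1/(1-s) - 2*c"
        unfolding KK_def using s0 by (auto intro!: derivative_eq_intros)
      moreover have "2*c \<le> 1/s + 1/(1-s)"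
      proof -
        have "s*(1-s) \<le> p*(1-p)"
        proof -
          have "p*(1-p) - s*(1-s) = (p-s)*(1-p-s)" by (simp add: algebra_simps)
          moreover have "0 \<le> (p-s)*(1-p-s)" using s p by auto
          ultimately show ?thesis by linarith
        qed
        hence "1/(p*(1-p)) \<le> 1/(s*(1-s))" using s0 p
          by (intro divide_left_mono) auto
        moreover have "1/s + 1/(1-s) = 1/(s*(1-s))" using s0 by (simp add: field_simps)
        moreover have "2*c = 1/(p*(1-p))" unfolding c_def by simp
        ultimately show ?thesis by linarith
      qed
      ultimately show "\<exists>y. DERIV KK s :> y \<and> 0 \<le> y" by auto
    qed
    hence "ln t - ln p - ln (1-t) + ln (1-p) - 2*c*(t-p) \<le> 0"
      unfolding KK_def by (simp add: algebra_simps)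
    with D show "\<exists>y. DERIV G t :> y \<and> y \<le> 0" by auto
  qed
  moreover have "G p = 0" unfolding G_def by simp
  moreover have "dbin q p = G q + c*(q-p)^2"
    unfolding G_def using dbin_inner[of q p] q0 q p by simp
  ultimately show ?thesis unfolding c_def by simp
qed

lemma binB:
  fixes p q :: real
  assumes p: "0 < p" "p < 1/2" and q: "p \<le> q" "q \<le> 1"
  shows "phi p * (q-p)^2 \<le> dbin q p"
proof -
  define N where "N = ln (1-p) - ln p"
  define c where "c = N / (1 - 2*p)"
  have cphi: "c = phi p" unfolding c_def N_def using phi_lt p by simp
  have cN: "c * (1-2*p) = N" unfolding c_def using p by simp
  define h where "h = (\<lambda>t. ln t - ln (1-t) - 2*c*(t - 1/2))"
  define G where "G = (\<lambda>t. t * (ln t - ln p) + (1-t) * (ln (1-t) - ln (1-p)) - c*(t-p)^2)"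
  have GD: "DERIV G t :> h t" if "0 < t" "t < 1" for t
  proof -
    have "ln t - ln p - ln (1-t) + ln (1-p) - 2*c*(t-p) = h t"
      unfolding h_def using cN unfolding N_def by (simp add: algebra_simps)
    thus ?thesis using DG[OF that, of "ln p" "ln (1-p)" c p] unfolding G_def by simp
  qed
  have hp: "h p = 0" unfolding h_def using cN unfolding N_def by (simp add: algebra_simps)
  have hhalf: "h (1/2) = 0" unfolding h_def by simp
  have hsym: "h (1-t) = - h t" for t unfolding h_def by (simp add: algebra_simps)
  have hderiv: "DERIV h t :> 1/t + 1/(1-t) - 2*c" if "0 < t" "t < 1" for t
    unfolding h_def using that by (auto intro!: derivative_eq_intros)
  have inv_eq: "1/t + 1/(1-t) = 1/(t*(1-t))" if "0 < t" "t < 1" for t::real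
    using that by (simp add: field_simps)
  have conv: "convex_on {1/2..<1} h"
  proof (rule convex_on_realI[where f' = "\<lambda>t. 1/t + 1/(1-t) - 2*c"])
    show "connected {1/2..<1::real}" by simp
    show "DERIV h x :> 1/x + 1/(1-x) - 2*c" if "x \<in> {1/2..<1}" for x
      using hderiv that by auto
    fix x y :: real assume xy: "x \<in> {1/2..<1}" "y \<in> {1/2..<1}" "x \<le> y"
    have "y*(1-y) \<le> x*(1-x)"
    proof -
      have "x*(1-x) - y*(1-y) = (y-x)*(x+y-1)" by (simp add: algebra_simps)
      moreover have "0 \<le> (y-x)*(x+y-1)" using xy by auto
      ultimately show ?thesis by linarith
    qed
    hence "1/(x*(1-x)) \<le> 1/(y*(1-y))" using xy by (intro divide_left_mono) auto
    thus "1/x + 1/(1-x) - 2*c \<le> 1/y + 1/(1-y) - 2*c" using inv_eq[of x] inv_eq[of y] xy by auto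
  qed
  have conc: "convex_on {0<..1/2} (\<lambda>t. - h t)"
  proof (rule convex_on_realI[where f' = "\<lambda>t. -(1/t + 1/(1-t) - 2*c)"])
    show "connected {0<..1/2::real}" by simp
    show "DERIV (\<lambda>t. - h t) x :> -(1/x + 1/(1-x) - 2*c)" if "x \<in> {0<..1/2}" for x
      using hderiv[of x] that by (auto intro!: derivative_eq_intros)
    fix x y :: real assume xy: "x \<in> {0<..1/2}" "y \<in> {0<..1/2}" "x \<le> y"
    have "x*(1-x) \<le> y*(1-y)"
    proof -
      have "y*(1-y) - x*(1-x) = (y-x)*(1-x-y)" by (simp add: algebra_simps)
      moreover have "0 \<le> (y-x)*(1-x-y)" using xy by auto
      ultimately show ?thesis by linarith
    qed
    hence "1/(y*(1-y)) \<le> 1/(x*(1-x))" using xy by (intro divide_left_mono) auto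
    thus "-(1/x + 1/(1-x) - 2*c) \<le> -(1/y + 1/(1-y) - 2*c)" using inv_eq[of x] inv_eq[of y] xy by auto
  qed
  have h1: "0 \<le> h t" if "p \<le> t" "t \<le> 1/2" for t
  proof -
    define s where "s = (t - p) / (1/2 - p)"
    have s01: "0 \<le> s" "s \<le> 1" unfolding s_def using that p by (auto simp: divide_le_eq)
    have "s * (1/2 - p) = t - p" unfolding s_def using p by simp
    hence ts: "t = (1-s) *\<^sub>R p + s *\<^sub>R (1/2)" by (simp add: algebra_simps)
    have "- h ((1-s) *\<^sub>R p + s *\<^sub>R (1/2)) \<le> (1-s) * (- h p) + s * (- h (1/2))"
      by (rule convex_onD[OF conc]) (use s01 p in auto)
    thus ?thesis using hp hhalf ts by simp
  qed
  have h2: "h t \<le> 0" if "1/2 \<le> t" "t \<le> 1-p" for t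
    using h1[of "1-t"] hsym[of t] that by simp
  have hp1: "h (1-p) = 0" using hsym[of p] hp by simp
  have h3: "0 \<le> h t" if "1-p \<le> t" "t < 1" for t
  proof -
    define s where "s = (1/2 - p) / (t - 1/2)"
    have s01: "0 < s" "s \<le> 1" unfolding s_def using that p by (auto simp: divide_le_eq)
    have "s * (t - 1/2) = 1/2 - p" unfolding s_def using p that by simp
    hence ts: "1-p = (1-s) *\<^sub>R (1/2) + s *\<^sub>R t" by (simp add: field_simps)
    have "h ((1-s) *\<^sub>R (1/2) + s *\<^sub>R t) \<le> (1-s) * h (1/2) + s * h t"
      by (rule convex_onD[OF conv]) (use s01 p that in auto)
    hence "0 \<le> s * h t" using hp1 hhalf ts by simp
    thus ?thesis using s01 by (simp add: zero_le_mult_iff)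
  qed
  have Gp: "G p = 0" unfolding G_def by simp
  have Gp1: "G (1-p) = 0"
  proof -
    have "G (1-p) = (1-2*p) * N - c*(1-2*p)^2" unfolding G_def N_def by (simp add: algebra_simps power2_eq_square)
    also have "\<dots> = 0" using cN by (simp add: power2_eq_square)
    finally show ?thesis .
  qed
  have Gnn: "0 \<le> G t" if "p \<le> t" "t < 1" for t
  proof -
    consider "t \<le> 1/2" | "1/2 \<le> t" "t \<le> 1-p" | "1-p \<le> t" by linarith
    thus ?thesis
    proof cases
      case 1
      have "G p \<le> G t"
      proof (rule DERIV_nonneg_imp_nondecreasing[OF that(1)]) 
        fix x assume x: "p \<le> x" "x \<le> t"
        have "0 < x" "x < 1" using x p that by (auto, linarith?)
        moreover have "0 \<le> h x" using h1[of x] x p that 1 by auto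
        ultimately show "\<exists>y. DERIV G x :> y \<and> 0 \<le> y" using GD by blast
      qed
      thus ?thesis using Gp by simp
    next
      case 2
      have "G (1-p) \<le> G t"
      proof (rule DERIV_nonpos_imp_nonincreasing[OF 2(2)]) 
        fix x assume x: "t \<le> x" "x \<le> 1-p"
        have "0 < x" "x < 1" using x p that by (auto, linarith?)
        moreover have "h x \<le> 0" using h2[of x] x p that 2 by auto
        ultimately show "\<exists>y. DERIV G x :> y \<and> y \<le> 0" using GD by blast
      qed
      thus ?thesis using Gp1 by simp
    next
      case 3
      have "G (1-p) \<le> G t"
      proof (rule DERIV_nonneg_imp_nondecreasing[OF 3]) 
        fix x assume x: "1-p \<le> x" "x \<le> t"
        have "0 < x" "x < 1" using x p that by (auto, linarith?)
        moreover have "0 \<le> h x" using h3[of x] x p that 3 by auto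
        ultimately show "\<exists>y. DERIV G x :> y \<and> 0 \<le> y" using GD by blast
      qed
      thus ?thesis using Gp1 by simp
    qed
  qed
  show ?thesis
  proof (cases "q = 1")
    case False
    hence "q < 1" using q by simp
    have "dbin q p = G q + c*(q-p)^2"
      unfolding G_def using dbin_inner[of q p] q p \<open>q < 1\<close> by simp
    thus ?thesis using Gnn[OF q(1) \<open>q < 1\<close>] cphi by simp
  next
    case True
    have lim: "(G \<longlongrightarrow> - ln p - c*(1-p)^2) (at_left 1)"
      unfolding G_def using p by real_asymp
    have ev: "eventually (\<lambda>t. 0 \<le> G t) (at_left 1)"
    proof -
      have "eventually (\<lambda>x. x \<in> {p<..<1}) (at_left (1::real))" using p by (intro eventually_at_left_real) simp
      thus ?thesis by (rule eventually_mono) (use Gnn in auto)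
    qed
    have "0 \<le> - ln p - c*(1-p)^2"
      by (rule tendsto_lowerbound[OF lim ev]) simp
    moreover have "dbin q p = - ln p" using True p unfolding dbin_def xl_def by (simp add: ln_div)
    ultimately show ?thesis using cphi True by simp
  qed
qed

lemma bin_half:
  fixes p q r :: real
  assumes p: "0 < p" "p \<le> 1/2" and r: "p \<le> r" "r \<le> 1/2" and q: "0 \<le> q" "q \<le> 1"
  shows "phi r * (q-p)^2 \<le> dbin q p"
proof -
  have r0: "0 < r" using p r by simp
  have key: "phi r * (q-p)^2 \<le> (q-p)^2 / (2*p*(1-p))"
  proof -
    have "p*(1-p) \<le> r*(1-r)"
    proof -
      have "r*(1-r) - p*(1-p) = (r-p)*(1-r-p)" by (simp add: algebra_simps)
      moreover have "0 \<le> (r-p)*(1-r-p)" using p r by auto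
      ultimately show ?thesis by linarith
    qed
    hence "1/(2*r*(1-r)) \<le> 1/(2*p*(1-p))" using p r by (intro divide_left_mono) auto
    hence "phi r \<le> 1/(2*p*(1-p))" using phi_le_C[OF r0 r(2)] by linarith
    hence "phi r * (q-p)^2 \<le> 1/(2*p*(1-p)) * (q-p)^2" by (rule mult_right_mono) simp
    thus ?thesis by simp
  qed
  consider "q \<le> p" | "p \<le> q" "p < 1/2" | "p \<le> q" "p = 1/2" using p by linarith
  thus ?thesis
  proof cases
    case 1
    thus ?thesis using binA[OF p q(1) 1] key by linarith
  next
    case 2
    have "phi r \<le> phi p" by (rule phi_mono) (use p r in auto)
    hence "phi r * (q-p)^2 \<le> phi p * (q-p)^2" by (rule mult_right_mono) simp
    thus ?thesis using binB[OF p(1) 2(2) 2(1) q(2)] by linarith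
  next
    case 3
    have "((1-q)-p)^2 / (2*p*(1-p)) \<le> dbin (1-q) p" by (rule binA) (use p q 3 in auto)
    moreover have "dbin (1-q) p = dbin q p" unfolding 3(2) using dbin_sym[of q "1/2"] by simp
    moreover have "((1-q)-p)^2 = (q-p)^2" using 3 by (simp add: power2_eq_square algebra_simps)
    ultimately show ?thesis using key by simp
  qed
qed

lemma bin_all:
  fixes p q r :: real
  assumes p: "0 < p" "p < 1" and q: "0 \<le> q" "q \<le> 1" and r: "min p (1-p) \<le> r" "r \<le> 1/2"
  shows "phi r * (q-p)^2 \<le> dbin q p"
proof (cases "p \<le> 1/2")
  case True
  thus ?thesis using bin_half[of p r q] p q r by auto
next
  case False
  have "phi r * ((1-q)-(1-p))^2 \<le> dbin (1-q) (1-p)"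
    by (rule bin_half) (use False p q r in auto)
  moreover have "((1-q)-(1-p))^2 = (q-p)^2" by (simp add: power2_eq_square algebra_simps)
  ultimately show ?thesis using dbin_sym by simp
qed


lemma KL_xl: "KL_div R P = (\<Sum>x\<in>UNIV. xl (R x) (P x))"
  unfolding KL_div_def xl_def by simp

lemma xl_term:
  fixes r p a b :: real
  assumes "0 \<le> r" "0 < p" "0 < a" "0 < b"
  shows "r * ln (a/b) + r - p*a/b \<le> xl r p"
proof (cases "r = 0")
  case True thus ?thesis using assms by (simp add: xl_def)
next
  case False
  hence r: "0 < r" using assms by simp
  have "ln (p*a/(r*b)) \<le> p*a/(r*b) - 1" using ln_le_minus_one r assms by simp
  moreover have "ln (p*a/(r*b)) = ln p + ln a - ln r - ln b"
    using r assms by (simp add: ln_div ln_mult)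
  ultimately have "1 - p*a/(r*b) \<le> ln r - ln p - (ln a - ln b)" by linarith
  hence A: "r * (1 - p*a/(r*b)) \<le> r * (ln r - ln p - (ln a - ln b))"
    using r by (intro mult_left_mono) auto
  have e1: "r * (1 - p*a/(r*b)) = r - p*a/b" using r by (simp add: field_simps)
  have e2: "xl r p = r * (ln r - ln p)" using r assms by (simp add: xl_def ln_div)
  have e3: "ln (a/b) = ln a - ln b" using assms by (simp add: ln_div)
  have "r - p*a/b \<le> r * (ln r - ln p - (ln a - ln b))" using A e1 by metis
  moreover have "r * (ln r - ln p - (ln a - ln b)) = xl r p - r * ln (a/b)"
    unfolding e2 e3 by (simp add: algebra_simps)
  ultimately show ?thesis by linarith
qed

lemma logsum:
  assumes "finite A" "\<And>x. x \<in> A \<Longrightarrow> 0 \<le> R x" "\<And>x. x \<in> A \<Longrightarrow> 0 < P x"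
  shows "xl (\<Sum>x\<in>A. R x) (\<Sum>x\<in>A. P x) \<le> (\<Sum>x\<in>A. xl (R x) (P x))"
proof (cases "(\<Sum>x\<in>A. R x) = 0")
  case True
  hence "\<forall>x\<in>A. R x = 0" using sum_nonneg_eq_0_iff[OF assms(1)] assms(2) by blast
  thus ?thesis using True by (simp add: xl_def)
next
  case False
  define a where "a = (\<Sum>x\<in>A. R x)"
  define b where "b = (\<Sum>x\<in>A. P x)"
  have a0: "0 < a" using False assms unfolding a_def by (metis order_le_less sum_nonneg)
  hence "A \<noteq> {}" unfolding a_def by auto
  hence b0: "0 < b" unfolding b_def using assms by (intro sum_pos) auto
  have "(\<Sum>x\<in>A. R x * ln (a/b) + R x - P x * a / b) \<le> (\<Sum>x\<in>A. xl (R x) (P x))"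
    by (rule sum_mono) (use xl_term assms a0 b0 in auto)
  moreover have "(\<Sum>x\<in>A. R x * ln (a/b) + R x - P x * a / b) = a * ln (a/b) + a - b * a / b"
    unfolding a_def b_def
    by (simp add: sum.distrib sum_subtractf sum_distrib_right[symmetric] sum_divide_distrib[symmetric])
  moreover have "xl a b = a * ln (a/b)" using a0 by (simp add: xl_def)
  ultimately show ?thesis using b0 unfolding a_def b_def by simp
qed

lemma sum_split_Compl:
  fixes f :: "'a::finite \<Rightarrow> real"
  shows "(\<Sum>x\<in>UNIV. f x) = (\<Sum>x\<in>A. f x) + (\<Sum>x\<in>-A. f x)"
proof -
  have "UNIV = A \<union> (-A)" by auto
  hence "(\<Sum>x\<in>UNIV. f x) = (\<Sum>x\<in>A \<union> (-A). f x)" by simp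
  also have "\<dots> = (\<Sum>x\<in>A. f x) + (\<Sum>x\<in>-A. f x)" by (rule sum.union_disjoint) auto
  finally show ?thesis .
qed

lemma KL_ge_dbin:
  fixes R P :: "'a::finite \<Rightarrow> real"
  assumes R: "is_pmf R" and P: "is_pmf P" "\<forall>x. 0 < P x"
  shows "dbin (\<Sum>x\<in>A. R x) (\<Sum>x\<in>A. P x) \<le> KL_div R P"
proof -
  have R0: "\<And>x. 0 \<le> R x" using R by (simp add: is_pmf_def)
  have s1: "(\<Sum>x\<in>-A. R x) = 1 - (\<Sum>x\<in>A. R x)" using sum_split_Compl[of R A] R by (simp add: is_pmf_def)
  have s2: "(\<Sum>x\<in>-A. P x) = 1 - (\<Sum>x\<in>A. P x)" using sum_split_Compl[of P A] P by (simp add: is_pmf_def)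
  have "xl (\<Sum>x\<in>A. R x) (\<Sum>x\<in>A. P x) \<le> (\<Sum>x\<in>A. xl (R x) (P x))"
    by (rule logsum) (use R0 P in auto)
  moreover have "xl (\<Sum>x\<in>-A. R x) (\<Sum>x\<in>-A. P x) \<le> (\<Sum>x\<in>-A. xl (R x) (P x))"
    by (rule logsum) (use R0 P in auto)
  ultimately show ?thesis unfolding dbin_def KL_xl using sum_split_Compl[of "\<lambda>x. xl (R x) (P x)" A] s1 s2
    by simp
qed

lemma sumsq_le:
  fixes f :: "'a \<Rightarrow> real"
  assumes "finite A" "\<And>x. x \<in> A \<Longrightarrow> 0 \<le> f x"
  shows "(\<Sum>x\<in>A. (f x)^2) \<le> (\<Sum>x\<in>A. f x)^2"
proof -
  have "(\<Sum>x\<in>A. (f x)^2) \<le> (\<Sum>x\<in>A. f x * (\<Sum>y\<in>A. f y))"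
    unfolding power2_eq_square
    by (rule sum_mono) (use assms in \<open>auto intro!: mult_left_mono member_le_sum\<close>)
  also have "\<dots> = (\<Sum>x\<in>A. f x)^2" by (simp add: sum_distrib_right[symmetric] power2_eq_square)
  finally show ?thesis .
qed

lemma chi2_nonneg: "\<forall>x. 0 < P x \<Longrightarrow> 0 \<le> chi2_div R P"
  unfolding chi2_div_def by (intro sum_nonneg) (simp add: less_imp_le)

lemma KL_le_chi2:
  fixes R P :: "'a::finite \<Rightarrow> real"
  assumes R: "is_pmf R" and P: "is_pmf P" "\<forall>x. 0 < P x"
  shows "KL_div R P \<le> chi2_div R P"
proof -
  have t: "xl (R x) (P x) \<le> (R x)^2 / P x - R x" for x
  proof (cases "R x = 0")
    case True thus ?thesis by (simp add: xl_def)
  next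
    case False
    have "0 \<le> R x" using R by (simp add: is_pmf_def)
    hence r: "0 < R x" using False by linarith
    have "ln (R x / P x) \<le> R x / P x - 1" using ln_le_minus_one r P by simp
    hence "R x * ln (R x / P x) \<le> R x * (R x / P x - 1)" using r by (intro mult_left_mono) auto
    thus ?thesis using r by (simp add: xl_def power2_eq_square algebra_simps)
  qed
  have "KL_div R P \<le> (\<Sum>x\<in>UNIV. (R x)^2 / P x - R x)" unfolding KL_xl by (rule sum_mono) (use t in auto)
  also have "\<dots> = (\<Sum>x\<in>UNIV. (R x)^2 / P x) - 1" using R by (simp add: sum_subtractf is_pmf_def)
  also have "\<dots> = chi2_div R P"
  proof -
    have "(R x - P x)^2 / P x = (R x)^2 / P x - 2 * R x + P x" for x
    proof -
      have "P x \<noteq> 0" using P by (metis less_irrefl)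
      thus ?thesis by (simp add: field_simps power2_eq_square)
    qed
    hence "chi2_div R P = (\<Sum>x\<in>UNIV. (R x)^2 / P x) - 2 * (\<Sum>x\<in>UNIV. R x) + (\<Sum>x\<in>UNIV. P x)"
      unfolding chi2_div_def by (simp add: sum.distrib sum_subtractf sum_distrib_left)
    thus ?thesis using R P by (simp add: is_pmf_def)
  qed
  finally show ?thesis .
qed


lemma pi_bounds:
  fixes P :: "'a::finite \<Rightarrow> real"
  shows "min (set_prob P A) (1 - set_prob P A) \<le> Max ((\<lambda>A. min (set_prob P A) (1 - set_prob P A)) ` UNIV)"
    "Max ((\<lambda>A. min (set_prob P A) (1 - set_prob P A)) ` UNIV) \<le> 1/2"
proof -
  show "min (set_prob P A) (1 - set_prob P A) \<le> Max ((\<lambda>A. min (set_prob P A) (1 - set_prob P A)) ` UNIV)"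
    by (rule Max_ge) auto
  have "Max ((\<lambda>A. min (set_prob P A) (1 - set_prob P A)) ` UNIV) \<in> (\<lambda>A. min (set_prob P A) (1 - set_prob P A)) ` UNIV"
    by (rule Max_in) auto
  then obtain B where "Max ((\<lambda>A. min (set_prob P A) (1 - set_prob P A)) ` UNIV) = min (set_prob P B) (1 - set_prob P B)" by blast
  thus "Max ((\<lambda>A. min (set_prob P A) (1 - set_prob P A)) ` UNIV) \<le> 1/2" by linarith
qed

lemma KL_self: fixes P :: "'a::finite \<Rightarrow> real" shows "KL_div P P = 0"
  unfolding KL_div_def by (simp add: sum.neutral)

lemma chi2_le_KL:
  fixes R P :: "'a::finite \<Rightarrow> real"
  assumes R: "is_pmf R" and P: "is_pmf P" "\<forall>x. 0 < P x"
  defines "piP \<equiv> Max ((\<lambda>A. min (set_prob P A) (1 - set_prob P A)) ` UNIV)"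
    and "m \<equiv> Min (range P)"
  shows "chi2_div R P * (phi piP * m) \<le> 2 * KL_div R P"
proof (cases "R = P")
  case True
  have "chi2_div R P = 0" unfolding True chi2_div_def by simp
  moreover have "KL_div R P = 0" unfolding True by (rule KL_self)
  ultimately show ?thesis by simp
next
  case False
  have R0: "\<And>x. 0 \<le> R x" and R1: "(\<Sum>x\<in>UNIV. R x) = 1" using R by (auto simp: is_pmf_def)
  have P1: "(\<Sum>x\<in>UNIV. P x) = 1" using P by (auto simp: is_pmf_def)
  define A where "A = {x. P x \<le> R x}"
  define p where "p = (\<Sum>x\<in>A. P x)"
  define q where "q = (\<Sum>x\<in>A. R x)"
  have ex1: "\<exists>x. R x < P x"
  proof (rule ccontr)
    assume "\<not> ?thesis"
    hence ge: "\<forall>x. P x \<le> R x" by (auto simp: not_less)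
    have "(\<Sum>x\<in>UNIV. R x - P x) = 0" using R1 P1 by (simp add: sum_subtractf)
    hence "\<forall>x\<in>UNIV. R x - P x = 0" using sum_nonneg_eq_0_iff[of UNIV "\<lambda>x. R x - P x"] ge by auto
    hence "R = P" by auto
    thus False using False by simp
  qed
  have ex2: "\<exists>x. P x \<le> R x"
  proof (rule ccontr)
    assume "\<not> ?thesis"
    hence "\<forall>x. R x < P x" by (auto simp: not_le)
    hence "(\<Sum>x\<in>UNIV. R x) < (\<Sum>x\<in>UNIV. P x)" by (intro sum_strict_mono) auto
    thus False using R1 P1 by simp
  qed
  have p0: "0 < p" unfolding p_def A_def using ex2 P by (intro sum_pos) auto
  have s2: "(\<Sum>x\<in>-A. P x) = 1 - p" using sum_split_Compl[of P A] P1 unfolding p_def by simp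
  have s1: "(\<Sum>x\<in>-A. R x) = 1 - q" using sum_split_Compl[of R A] R1 unfolding q_def by simp
  have "-A \<noteq> {}"
  proof -
    obtain x where "R x < P x" using ex1 by blast
    hence "x \<in> -A" unfolding A_def by auto
    thus ?thesis by blast
  qed
  hence "0 < (\<Sum>x\<in>-A. P x)" using P by (intro sum_pos) auto
  hence p1: "p < 1" using s2 by simp
  have q0: "0 \<le> q" unfolding q_def using R0 by (simp add: sum_nonneg)
  have "0 \<le> (\<Sum>x\<in>-A. R x)" using R0 by (simp add: sum_nonneg)
  hence q1: "q \<le> 1" using s1 by simp
  have pib: "min p (1-p) \<le> piP" "piP \<le> 1/2"
    using pi_bounds(1)[of P A] pi_bounds(2)[of P] unfolding piP_def p_def set_prob_def by auto
  have phi2: "2 \<le> phi piP" by (rule phi_ge2) (use pib p0 p1 in auto)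
  have key: "phi piP * (q-p)^2 \<le> KL_div R P"
    using bin_all[OF p0 p1 q0 q1 pib] KL_ge_dbin[OF R P, of A] unfolding p_def q_def by linarith
  have m0: "0 < m" unfolding m_def using P by (subst Min_gr_iff) auto
  have mle: "m \<le> P x" for x unfolding m_def by (rule Min_le) auto
  have "chi2_div R P * m = (\<Sum>x\<in>UNIV. (R x - P x)^2 * (m / P x))"
    unfolding chi2_div_def by (simp add: sum_distrib_right)
  also have "\<dots> \<le> (\<Sum>x\<in>UNIV. (R x - P x)^2)"
  proof (rule sum_mono)
    fix x
    have "m / P x \<le> 1" using mle[of x] P by (simp add: divide_le_eq)
    thus "(R x - P x)^2 * (m / P x) \<le> (R x - P x)^2"
      using mult_left_mono[of "m / P x" 1 "(R x - P x)^2"] by (simp del: times_divide_eq_right)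
  qed
  also have "\<dots> = (\<Sum>x\<in>A. (R x - P x)^2) + (\<Sum>x\<in>-A. (P x - R x)^2)"
    using sum_split_Compl[of "\<lambda>x. (R x - P x)^2" A] by (simp add: power2_commute)
  also have "\<dots> \<le> (\<Sum>x\<in>A. R x - P x)^2 + (\<Sum>x\<in>-A. P x - R x)^2"
    by (intro add_mono sumsq_le) (auto simp: A_def)
  also have "\<dots> = 2 * (q-p)^2"
  proof -
    have "(\<Sum>x\<in>A. R x - P x) = q - p" unfolding p_def q_def by (simp add: sum_subtractf)
    moreover have "(\<Sum>x\<in>-A. P x - R x) = q - p" using s1 s2 by (simp add: sum_subtractf)
    ultimately show ?thesis by simp
  qed
  finally have cm: "chi2_div R P * m \<le> 2 * (q-p)^2" .
  have "chi2_div R P * (phi piP * m) = phi piP * (chi2_div R P * m)" by simp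
  also have "\<dots> \<le> phi piP * (2 * (q-p)^2)" using phi2 cm by (intro mult_left_mono) auto
  also have "\<dots> \<le> 2 * KL_div R P" using key by simp
  finally show ?thesis .
qed


lemma apply_chan_pmf:
  assumes W0: "\<forall>y x. 0 \<le> W y x" and W1: "\<forall>x. (\<Sum>y\<in>UNIV. W y x) = 1" and R: "is_pmf R"
  shows "is_pmf (apply_chan W R)"
proof -
  have "\<forall>y. 0 \<le> apply_chan W R y" unfolding apply_chan_def using W0 R
    by (auto simp: is_pmf_def intro!: sum_nonneg)
  moreover have "(\<Sum>y\<in>UNIV. apply_chan W R y) = (\<Sum>x\<in>UNIV. (\<Sum>y\<in>UNIV. W y x) * R x)"
    unfolding apply_chan_def by (subst sum.swap) (simp add: sum_distrib_right)
  ultimately show ?thesis using W1 R by (simp add: is_pmf_def)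
qed

lemma chi2_dpi:
  fixes W :: "'y::finite \<Rightarrow> 'x::finite \<Rightarrow> real"
  assumes W0: "\<forall>y x. 0 \<le> W y x" and W1: "\<forall>x. (\<Sum>y\<in>UNIV. W y x) = 1"
    and P: "\<forall>x. 0 < P x" and WP: "\<forall>y. 0 < apply_chan W P y"
  shows "chi2_div (apply_chan W R) (apply_chan W P) \<le> chi2_div R P"
proof -
  have per: "(apply_chan W R y - apply_chan W P y)^2 / apply_chan W P y
      \<le> (\<Sum>x\<in>UNIV. W y x * ((R x - P x)^2 / P x))" for y
  proof -
    define a where "a = (\<lambda>x. sqrt (W y x * P x))"
    define b where "b = (\<lambda>x. sqrt (W y x / P x) * (R x - P x))"
    have ab: "a x * b x = W y x * (R x - P x)" for x
    proof -
      have "sqrt (W y x * P x) * sqrt (W y x / P x) = sqrt ((W y x)^2)"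
        using P by (simp add: real_sqrt_mult[symmetric] power2_eq_square less_imp_neq[symmetric])
      also have "\<dots> = W y x" using W0 by simp
      finally show ?thesis unfolding a_def b_def by (simp add: mult.assoc)
    qed
    have a2: "(a x)^2 = W y x * P x" for x unfolding a_def using W0 P by (simp add: less_imp_le)
    have b2: "(b x)^2 = W y x * ((R x - P x)^2 / P x)" for x
      unfolding b_def using W0 P by (simp add: power_mult_distrib less_imp_le)
    have diff: "apply_chan W R y - apply_chan W P y = (\<Sum>x\<in>UNIV. a x * b x)"
      unfolding ab apply_chan_def by (simp add: sum_subtractf algebra_simps)
    have "(\<Sum>x\<in>UNIV. a x * b x)^2 \<le> (\<Sum>x\<in>UNIV. (a x)^2) * (\<Sum>x\<in>UNIV. (b x)^2)"
      by (rule Cauchy_Schwarz_ineq_sum)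
    also have "\<dots> = apply_chan W P y * (\<Sum>x\<in>UNIV. W y x * ((R x - P x)^2 / P x))"
      unfolding a2 b2 apply_chan_def by simp
    finally have "(apply_chan W R y - apply_chan W P y)^2 \<le> apply_chan W P y * (\<Sum>x\<in>UNIV. W y x * ((R x - P x)^2 / P x))"
      unfolding diff .
    thus ?thesis using WP by (simp add: divide_le_eq mult.commute)
  qed
  have "chi2_div (apply_chan W R) (apply_chan W P) \<le> (\<Sum>y\<in>UNIV. \<Sum>x\<in>UNIV. W y x * ((R x - P x)^2 / P x))"
    unfolding chi2_div_def by (rule sum_mono) (rule per)
  also have "\<dots> = (\<Sum>x\<in>UNIV. (\<Sum>y\<in>UNIV. W y x) * ((R x - P x)^2 / P x))"
    by (subst sum.swap) (simp only: sum_distrib_right)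
  also have "\<dots> = chi2_div R P" using W1 unfolding chi2_div_def by simp
  finally show ?thesis .
qed

lemma term_lim:
  fixes a b :: real assumes a: "0 < a"
  shows "((\<lambda>e. ((a + e*b) * ln ((a+e*b)/a) - e*b) / e^2) \<longlongrightarrow> b^2/(2*a)) (at_right 0)"
proof -
  consider "b > 0" | "b < 0" | "b = 0" by linarith
  thus ?thesis
  proof cases
    case 1 thus ?thesis using a by (real_asymp simp: field_simps power2_eq_square)
  next
    case 2 thus ?thesis using a by (real_asymp simp: field_simps power2_eq_square)
  next
    case 3 thus ?thesis by simp
  qed
qed

lemma KL_lim:
  fixes a b :: "'a::finite \<Rightarrow> real"
  assumes a: "\<forall>x. 0 < a x" and b: "(\<Sum>x\<in>UNIV. b x) = 0"
  shows "((\<lambda>e. KL_div (\<lambda>x. a x + e * b x) a / e^2) \<longlongrightarrow> chi2_div (\<lambda>x. a x + b x) a / 2) (at_right 0)"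
proof -
  have lim: "((\<lambda>e. \<Sum>x\<in>UNIV. ((a x + e*b x) * ln ((a x+e*b x)/a x) - e*b x) / e^2)
      \<longlongrightarrow> (\<Sum>x\<in>UNIV. (b x)^2/(2*a x))) (at_right 0)"
    by (intro tendsto_sum term_lim) (use a in auto)
  have tgt: "(\<Sum>x\<in>UNIV. (b x)^2/(2*a x)) = chi2_div (\<lambda>x. a x + b x) a / 2"
    unfolding chi2_div_def by (simp add: sum_divide_distrib ac_simps)
  have ev1: "eventually (\<lambda>e. \<forall>x. 0 < a x + e * b x) (at_right (0::real))"
  proof (rule eventually_all_finite)
    fix x
    have "((\<lambda>e. a x + e * b x) \<longlongrightarrow> a x + 0 * b x) (at_right 0)"
      by (intro tendsto_intros)
    thus "eventually (\<lambda>e. 0 < a x + e * b x) (at_right 0)"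
      using a by (intro order_tendstoD(1)) auto
  qed
  have ev: "eventually (\<lambda>e. (\<Sum>x\<in>UNIV. ((a x + e*b x) * ln ((a x+e*b x)/a x) - e*b x) / e^2)
      = KL_div (\<lambda>x. a x + e * b x) a / e^2) (at_right 0)"
    using ev1
  proof (rule eventually_mono)
    fix e :: real assume pos: "\<forall>x. 0 < a x + e * b x"
    have "KL_div (\<lambda>x. a x + e * b x) a = (\<Sum>x\<in>UNIV. (a x + e*b x) * ln ((a x+e*b x)/a x))"
      unfolding KL_div_def using pos by (intro sum.cong) (auto simp: less_irrefl dest: spec[of _ _] )
    moreover have "(\<Sum>x\<in>UNIV. e * b x) = 0" using b by (simp add: sum_distrib_left[symmetric])
    ultimately show "(\<Sum>x\<in>UNIV. ((a x + e*b x) * ln ((a x+e*b x)/a x) - e*b x) / e^2)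
      = KL_div (\<lambda>x. a x + e * b x) a / e^2"
      by (simp add: sum_divide_distrib[symmetric] sum_subtractf)
  qed
  show ?thesis using Lim_transform_eventually[OF lim ev] tgt by simp
qed


theorem theorem3:
  fixes PXY :: "'x::finite \<Rightarrow> 'y::finite \<Rightarrow> real"
  assumes "CARD('x) \<ge> 2" and "CARD('y) \<ge> 2"
    and "\<forall>x y. 0 \<le> PXY x y"
    and "(\<Sum>x\<in>UNIV. \<Sum>y\<in>UNIV. PXY x y) = 1"
    and "\<forall>x. marg_X PXY x > 0"
    and "\<forall>y. marg_Y PXY y > 0"
  shows "eta_chi2 (marg_X PXY) (chan PXY) \<le> eta_KL (marg_X PXY) (chan PXY)
    \<and> eta_KL (marg_X PXY) (chan PXY)
      \<le> 2 * eta_chi2 (marg_X PXY) (chan PXY) /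
        (phi (Max ((\<lambda>A. min (set_prob (marg_X PXY) A) (1 - set_prob (marg_X PXY) A)) ` UNIV))
         * Min (range (marg_X PXY)))"
proof -
  define P where "P = marg_X PXY"
  define W where "W = chan PXY"
  have P0: "\<forall>x. 0 < P x" using assms(5) unfolding P_def by simp
  have Ppmf: "is_pmf P" using P0 assms(4) unfolding is_pmf_def P_def marg_X_def
    by (auto simp: less_imp_le)
  have W0: "\<forall>y x. 0 \<le> W y x" using assms(3) P0 unfolding W_def chan_def P_def
    by (auto simp: less_imp_le)
  have W1: "\<forall>x. (\<Sum>y\<in>UNIV. W y x) = 1"
  proof
    fix x
    have "(\<Sum>y\<in>UNIV. W y x) = (\<Sum>y\<in>UNIV. PXY x y) / P x"
      unfolding W_def chan_def P_def by (simp add: sum_divide_distrib)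
    also have "\<dots> = 1" using P0 unfolding P_def marg_X_def by (metis less_irrefl divide_self)
    finally show "(\<Sum>y\<in>UNIV. W y x) = 1" .
  qed
  have WPeq: "apply_chan W P = marg_Y PXY"
  proof
    fix y
    have "W y x * P x = PXY x y" for x using P0 unfolding W_def chan_def P_def
      by (metis less_irrefl nonzero_divide_eq_eq)
    thus "apply_chan W P y = marg_Y PXY y" unfolding apply_chan_def marg_Y_def by simp
  qed
  have WP0: "\<forall>y. 0 < apply_chan W P y" using assms(6) WPeq by simp
  have WPpmf: "is_pmf (apply_chan W P)" by (rule apply_chan_pmf[OF W0 W1 Ppmf])
  define SC where "SC = {chi2_div (apply_chan W R) (apply_chan W P) / chi2_div R P | R. is_pmf R \<and> 0 < chi2_div R P}"
  define SK where "SK = {KL_div (apply_chan W R) (apply_chan W P) / KL_div R P | R. is_pmf R \<and> 0 < KL_div R P}"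
  have etac: "eta_chi2 (marg_X PXY) (chan PXY) = Sup SC"
    unfolding eta_chi2_def contraction_coeff_def SC_def P_def W_def ..
  have etak: "eta_KL (marg_X PXY) (chan PXY) = Sup SK"
    unfolding eta_KL_def contraction_coeff_def SK_def P_def W_def ..
  obtain x0 x1 :: 'x where x01: "x0 \<noteq> x1"
  proof -
    have "\<exists>x0 x1::'x. x0 \<noteq> x1"
    proof (rule ccontr)
      assume "\<not> ?thesis"
      hence "(UNIV :: 'x set) = {undefined}" by auto
      hence "CARD('x) = card {undefined::'x}" by (simp only:)
      hence "CARD('x) = 1" by simp
      thus False using assms(1) by simp
    qed
    thus ?thesis using that by blast
  qed
  define R0 where "R0 = (\<lambda>x. if x = x0 then 1 else (0::real))"
  have R0pmf: "is_pmf R0" unfolding is_pmf_def R0_def by simp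
  have Px0: "P x0 < 1"
  proof -
    have "(\<Sum>x\<in>{x0,x1}. P x) \<le> (\<Sum>x\<in>UNIV. P x)"
      by (rule sum_mono2) (use P0 in \<open>auto simp: less_imp_le\<close>)
    thus ?thesis using Ppmf P0 x01 by (simp add: is_pmf_def) (smt (verit) P0)
  qed
  have KLR0: "0 < KL_div R0 P"
  proof -
    have "\<And>x. xl (R0 x) (P x) = (if x = x0 then ln (1 / P x0) else 0)"
      unfolding R0_def xl_def by simp
    hence "KL_div R0 P = ln (1 / P x0)" unfolding KL_xl by simp
    moreover have "1 < 1 / P x0" using Px0 P0 by simp
    hence "0 < ln (1 / P x0)" by (rule ln_gt_zero)
    ultimately show ?thesis by simp
  qed
  have chiR0: "0 < chi2_div R0 P"
  proof -
    have "(R0 x1 - P x1)^2 / P x1 \<le> chi2_div R0 P"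
      unfolding chi2_div_def by (rule member_le_sum) (use P0 in \<open>auto simp: less_imp_le\<close>)
    moreover have "0 < (R0 x1 - P x1)^2 / P x1" using P0[rule_format, of x1] x01 unfolding R0_def by simp
    ultimately show ?thesis by linarith
  qed
  have chi_nn: "\<And>R. 0 \<le> chi2_div R P" using chi2_nonneg P0 by blast
  have chiout_nn: "\<And>R. 0 \<le> chi2_div (apply_chan W R) (apply_chan W P)" using chi2_nonneg WP0 by blast
  have dpi: "\<And>R. chi2_div (apply_chan W R) (apply_chan W P) \<le> chi2_div R P"
    by (rule chi2_dpi[OF W0 W1 P0 WP0])
  have SCne: "SC \<noteq> {}" unfolding SC_def using R0pmf chiR0 by blast
  have SCbdd: "bdd_above SC"
  proof (rule bdd_aboveI[of _ 1])
    fix r assume "r \<in> SC"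
    then obtain R where "r = chi2_div (apply_chan W R) (apply_chan W P) / chi2_div R P" "0 < chi2_div R P"
      unfolding SC_def by blast
    thus "r \<le> 1" using dpi[of R] by (simp add: divide_le_eq_1)
  qed
  define ec where "ec = Sup SC"
  have ec0: "0 \<le> ec"
  proof -
    have "chi2_div (apply_chan W R0) (apply_chan W P) / chi2_div R0 P \<in> SC"
      unfolding SC_def using R0pmf chiR0 by blast
    hence "chi2_div (apply_chan W R0) (apply_chan W P) / chi2_div R0 P \<le> ec"
      unfolding ec_def by (rule cSup_upper[OF _ SCbdd])
    moreover have "0 \<le> chi2_div (apply_chan W R0) (apply_chan W P) / chi2_div R0 P"
      using chiout_nn chi_nn by simp
    ultimately show ?thesis by linarith
  qed
  have chi_out: "chi2_div (apply_chan W R) (apply_chan W P) \<le> ec * chi2_div R P" if R: "is_pmf R" for R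
  proof (cases "0 < chi2_div R P")
    case True
    hence "chi2_div (apply_chan W R) (apply_chan W P) / chi2_div R P \<in> SC"
      unfolding SC_def using R by blast
    hence "chi2_div (apply_chan W R) (apply_chan W P) / chi2_div R P \<le> ec"
      unfolding ec_def by (rule cSup_upper[OF _ SCbdd])
    thus ?thesis using True by (simp add: divide_le_eq)
  next
    case False
    hence "chi2_div R P = 0" using chi_nn[of R] by linarith
    thus ?thesis using dpi[of R] by simp
  qed
  define piP where "piP = Max ((\<lambda>A. min (set_prob P A) (1 - set_prob P A)) ` UNIV)"
  define m where "m = Min (range P)"
  have m0: "0 < m" unfolding m_def using P0 by (subst Min_gr_iff) auto
  have pib: "min (P x0) (1 - P x0) \<le> piP" "piP \<le> 1/2"
    using pi_bounds(1)[of P "{x0}"] pi_bounds(2)[of P] unfolding piP_def set_prob_def by auto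
  have pi0: "0 < piP" using pib Px0 P0 by (smt (verit))
  have phi2: "2 \<le> phi piP" by (rule phi_ge2[OF pi0 pib(2)])
  define B where "B = 2 * ec / (phi piP * m)"
  have pm0: "0 < phi piP * m" using phi2 m0 by simp
  have SKbound: "r \<le> B" if "r \<in> SK" for r
  proof -
    obtain R where R: "is_pmf R" "0 < KL_div R P"
      and r: "r = KL_div (apply_chan W R) (apply_chan W P) / KL_div R P"
      using \<open>r \<in> SK\<close> unfolding SK_def by blast
    have WRpmf: "is_pmf (apply_chan W R)" by (rule apply_chan_pmf[OF W0 W1 R(1)])
    have "KL_div (apply_chan W R) (apply_chan W P) \<le> chi2_div (apply_chan W R) (apply_chan W P)"
      by (rule KL_le_chi2[OF WRpmf WPpmf WP0])
    also have "\<dots> \<le> ec * chi2_div R P" by (rule chi_out[OF R(1)])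
    also have "\<dots> \<le> ec * (2 * KL_div R P / (phi piP * m))"
    proof (rule mult_left_mono[OF _ ec0])
      have "chi2_div R P * (phi piP * m) \<le> 2 * KL_div R P"
        using chi2_le_KL[OF R(1) Ppmf P0] unfolding piP_def m_def by simp
      thus "chi2_div R P \<le> 2 * KL_div R P / (phi piP * m)" using pm0 by (simp add: le_divide_eq)
    qed
    also have "\<dots> = B * KL_div R P" unfolding B_def by simp
    finally show ?thesis unfolding r using R(2) by (simp add: divide_le_eq)
  qed
  have SKne: "SK \<noteq> {}" unfolding SK_def using R0pmf KLR0 by blast
  have SKbdd: "bdd_above SK" using SKbound by (intro bdd_aboveI) blast
  define ek where "ek = Sup SK"
  have part2: "ek \<le> B" unfolding ek_def by (rule cSup_least[OF SKne]) (rule SKbound)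
  have part1: "ec \<le> ek"
    unfolding ec_def
  proof (rule cSup_least[OF SCne])
    fix r assume "r \<in> SC"
    then obtain R where R: "is_pmf R" "0 < chi2_div R P"
      and r: "r = chi2_div (apply_chan W R) (apply_chan W P) / chi2_div R P"
      unfolding SC_def by blast
    define Re where "Re = (\<lambda>e x. P x + e * (R x - P x))"
    have Re_pmf: "is_pmf (Re e)" if "0 \<le> e" "e \<le> 1" for e
    proof -
      have "0 \<le> Re e x" for x
      proof -
        have "Re e x = (1-e) * P x + e * R x" unfolding Re_def by (simp add: algebra_simps)
        moreover have "0 \<le> (1-e) * P x" using that P0 by (simp add: less_imp_le)
        moreover have "0 \<le> e * R x" using that R by (simp add: is_pmf_def)
        ultimately show ?thesis by linarith
      qed
      moreover have "(\<Sum>x\<in>UNIV. Re e x) = 1" unfolding Re_def using Ppmf R(1)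
        by (simp add: sum.distrib sum_distrib_left[symmetric] sum_subtractf is_pmf_def)
      ultimately show ?thesis unfolding is_pmf_def by simp
    qed
    have WRe: "apply_chan W (Re e) = (\<lambda>y. apply_chan W P y + e * (apply_chan W R y - apply_chan W P y))" for e
      unfolding Re_def apply_chan_def
      by (rule ext) (simp add: algebra_simps sum.distrib sum_distrib_left sum_subtractf)
    have sb1: "(\<Sum>x\<in>UNIV. R x - P x) = 0" using R(1) Ppmf by (simp add: sum_subtractf is_pmf_def)
    have WRpmf: "is_pmf (apply_chan W R)" by (rule apply_chan_pmf[OF W0 W1 R(1)])
    have sb2: "(\<Sum>y\<in>UNIV. apply_chan W R y - apply_chan W P y) = 0"
      using WRpmf WPpmf by (simp add: sum_subtractf is_pmf_def)
    have Dlim: "((\<lambda>e. KL_div (Re e) P / e^2) \<longlongrightarrow> chi2_div R P / 2) (at_right 0)"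
    proof -
      have "(\<lambda>x. P x + (R x - P x)) = R" by auto
      thus ?thesis using KL_lim[OF P0 sb1] unfolding Re_def by simp
    qed
    have Nlim: "((\<lambda>e. KL_div (apply_chan W (Re e)) (apply_chan W P) / e^2)
        \<longlongrightarrow> chi2_div (apply_chan W R) (apply_chan W P) / 2) (at_right 0)"
    proof -
      have "(\<lambda>y. apply_chan W P y + (apply_chan W R y - apply_chan W P y)) = apply_chan W R" by auto
      thus ?thesis using KL_lim[OF WP0 sb2] unfolding WRe by simp
    qed
    have lim: "((\<lambda>e. (KL_div (apply_chan W (Re e)) (apply_chan W P) / e^2) / (KL_div (Re e) P / e^2))
        \<longlongrightarrow> (chi2_div (apply_chan W R) (apply_chan W P) / 2) / (chi2_div R P / 2)) (at_right 0)"
      by (rule tendsto_divide[OF Nlim Dlim]) (use R(2) in simp)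
    have evpos: "eventually (\<lambda>e. 0 < KL_div (Re e) P / e^2) (at_right 0)"
      using order_tendstoD(1)[OF Dlim, of 0] R(2) by simp
    have evint: "eventually (\<lambda>e. e \<in> {0<..<1::real}) (at_right 0)"
      by (rule eventually_at_right_real) simp
    have ev: "eventually (\<lambda>e. (KL_div (apply_chan W (Re e)) (apply_chan W P) / e^2) / (KL_div (Re e) P / e^2) \<le> ek) (at_right 0)"
      using evpos evint
    proof (rule eventually_elim2)
      fix e :: real assume pos: "0 < KL_div (Re e) P / e^2" and e: "e \<in> {0<..<1}"
      have e0: "e \<noteq> 0" using e by simp
      have KLpos: "0 < KL_div (Re e) P" using pos e0 by (simp add: zero_less_divide_iff)
      have eq: "(KL_div (apply_chan W (Re e)) (apply_chan W P) / e^2) / (KL_div (Re e) P / e^2)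
          = KL_div (apply_chan W (Re e)) (apply_chan W P) / KL_div (Re e) P"
        using e0 by simp
      have mem: "KL_div (apply_chan W (Re e)) (apply_chan W P) / KL_div (Re e) P \<in> SK"
        unfolding SK_def using Re_pmf[of e] e KLpos by auto
      show "(KL_div (apply_chan W (Re e)) (apply_chan W P) / e^2) / (KL_div (Re e) P / e^2) \<le> ek"
        unfolding eq ek_def by (rule cSup_upper[OF mem SKbdd])
    qed
    have "(chi2_div (apply_chan W R) (apply_chan W P) / 2) / (chi2_div R P / 2) \<le> ek"
      by (rule tendsto_upperbound[OF lim ev]) simp
    thus "r \<le> ek" unfolding r by simp
  qed
  show ?thesis
    using part1 part2 etac etak unfolding ec_def ek_def B_def piP_def m_def P_def W_def
    by simp
qed


end
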